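(* Let $\mathcal{X}$ be a Banach space, $\mathcal{L}\in\mathcal{B}(\mathcal{X})$ the generator of a contractive uniformly continuous semigroup $(e^{t\mathcal{L}})_{t\ge0}$, and $M\in\mathcal{B}(\mathcal{X})$ a contraction such that $\|M^n-P\|_\infty\le\delta^n$ for a projection $P\in\mathcal{B}(\mathcal{X})$, some $\delta\in(0,1)$ and all $n\in\mathbb{N}$. Then for all $t\ge0$ and $n\in\mathbb{N}$, $$\Big\|\big(Me^{\frac tn\mathcal{L}}\big)^n-e^{tP\mathcal{L}P}P\Big\|_\infty\le c_p\frac{t\|\mathcal{L}\|_\infty}{n}+\frac{c_p+(1+e^{\tilde b})(1+c_p^2)}{2}\,\frac{t^2\|\mathcal{L}\|_\infty^2}{n}+\delta^n+\frac{2\delta}{1-\delta}\,\frac{e^{3t\|\mathcal{L}\|_\infty c_p}}{n},$$ where $c_p=\|\mathbf{1}-P\|_\infty$ and $e^{\tilde b}=\sup_{s\in[0,t]}\|e^{sP\mathcal{L}P}\|_\infty$.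
   Context: $\mathcal{B}(\mathcal{X})$: bounded operators with operator norm $\|\cdot\|_\infty$; $\mathbf{1}$ the identity; contraction: norm at most $1$; projection: bounded idempotent. Contractive semigroup: $\|e^{t\mathcal{L}}\|_\infty\le1$ for all $t\ge0$. *)

theory Defs
  imports "HOL-Analysis.Analysis"
begin

definition bl_pow :: "('a::real_normed_vector \<Rightarrow>\<^sub>L 'a) \<Rightarrow> nat \<Rightarrow> ('a \<Rightarrow>\<^sub>L 'a)" where
  "bl_pow A n = ((\<lambda>B. A o\<^sub>L B) ^^ n) id_blinfun"

definition bl_exp :: "('a::banach \<Rightarrow>\<^sub>L 'a) \<Rightarrow> ('a \<Rightarrow>\<^sub>L 'a)" where
  "bl_exp A = (\<Sum>k. (1 / fact k) *\<^sub>R bl_pow A k)"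

end

theory Submission
  imports Defs
begin


typedef (overloaded) 'a un = "UNIV :: (('a::banach \<Rightarrow>\<^sub>L 'a) \<times> real) set"
  morphisms rep_un Abs_un by simp

setup_lifting type_definition_un

instantiation un :: (banach) real_normed_vector
begin
lift_definition zero_un :: "'a un" is "0" .
lift_definition plus_un :: "'a un \<Rightarrow> 'a un \<Rightarrow> 'a un" is "(+)" .
lift_definition minus_un :: "'a un \<Rightarrow> 'a un \<Rightarrow> 'a un" is "(-)" .
lift_definition uminus_un :: "'a un \<Rightarrow> 'a un" is "uminus" .
lift_definition scaleR_un :: "real \<Rightarrow> 'a un \<Rightarrow> 'a un" is "scaleR" .
lift_definition norm_un :: "'a un \<Rightarrow> real" is "\<lambda>x. norm (fst x) + \<bar>snd x\<bar>" .
definition dist_un :: "'a un \<Rightarrow> 'a un \<Rightarrow> real" where "dist_un a b = norm (a - b)"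
definition sgn_un :: "'a un \<Rightarrow> 'a un" where "sgn_un x = scaleR (inverse (norm x)) x"
definition uniformity_un :: "('a un \<times> 'a un) filter" where
  "uniformity_un = (INF e\<in>{0 <..}. principal {(x, y). dist x y < e})"
definition open_un :: "'a un set \<Rightarrow> bool" where
  "open_un S = (\<forall>x\<in>S. \<forall>\<^sub>F (x', y) in uniformity. x' = x \<longrightarrow> y \<in> S)"
instance
proof
  fix a b c :: "'a un" and r s :: real
  show "a + b + c = a + (b + c)" by transfer (simp add: algebra_simps)
  show "a + b = b + a" by transfer (simp add: algebra_simps)
  show "0 + a = a" by transfer simp
  show "- a + a = 0" by transfer simp
  show "a - b = a + - b" by transfer simp
  show "r *\<^sub>R (a + b) = r *\<^sub>R a + r *\<^sub>R b" by transfer (simp add: algebra_simps)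
  show "(r + s) *\<^sub>R a = r *\<^sub>R a + s *\<^sub>R a" by transfer (simp add: algebra_simps)
  show "r *\<^sub>R s *\<^sub>R a = (r * s) *\<^sub>R a" by transfer simp
  show "1 *\<^sub>R a = a" by transfer simp
  show "dist a b = norm (a - b)" by (simp add: dist_un_def)
  show "sgn a = inverse (norm a) *\<^sub>R a" by (simp add: sgn_un_def)
  show "(norm a = 0) = (a = 0)" by transfer (auto simp: prod_eq_iff add_nonneg_eq_0_iff)
  show "norm (a + b) \<le> norm a + norm b"
    apply transfer
    subgoal for x y
      using add_mono[OF norm_triangle_ineq[of "fst x" "fst y"] abs_triangle_ineq[of "snd x" "snd y"]]
      by simp
    done
  show "norm (r *\<^sub>R a) = \<bar>r\<bar> * norm a" by transfer (simp add: abs_mult algebra_simps)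
qed (simp_all add: uniformity_un_def open_un_def)
end

lemma bl_eq: "(\<And>x. blinfun_apply a x = blinfun_apply b x) \<Longrightarrow> a = b"
  by (rule blinfun_eqI)

lemma un_mult_ineq:
  fixes x y :: "('a::banach \<Rightarrow>\<^sub>L 'a) \<times> real"
  shows "norm ((fst x o\<^sub>L fst y) + snd x *\<^sub>R fst y + snd y *\<^sub>R fst x) + \<bar>snd x * snd y\<bar>
       \<le> (norm (fst x) + \<bar>snd x\<bar>) * (norm (fst y) + \<bar>snd y\<bar>)"
proof -
  have "norm ((fst x o\<^sub>L fst y) + snd x *\<^sub>R fst y + snd y *\<^sub>R fst x)
       \<le> norm (fst x) * norm (fst y) + \<bar>snd x\<bar> * norm (fst y) + \<bar>snd y\<bar> * norm (fst x)"
    by (intro order_trans[OF norm_triangle_ineq] add_mono norm_blinfun_compose) auto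
  then show ?thesis
    by (simp add: algebra_simps abs_mult)
qed

instantiation un :: (banach) real_normed_algebra_1
begin
lift_definition one_un :: "'a un" is "(0, 1)" .
lift_definition times_un :: "'a un \<Rightarrow> 'a un \<Rightarrow> 'a un" is
  "\<lambda>x y. ((fst x o\<^sub>L fst y) + snd x *\<^sub>R fst y + snd y *\<^sub>R fst x, snd x * snd y)" .
instance
proof
  fix a b c :: "'a un" and r :: real
  show "a * b * c = a * (b * c)"
    apply transfer
    apply (simp only: prod_eq_iff fst_conv snd_conv)
    apply (intro conjI blinfun_eqI)
     apply (simp_all add: blinfun.bilinear_simps algebra_simps)
    done
  show "(a + b) * c = a * c + b * c"
    apply transfer
    apply (simp only: prod_eq_iff fst_conv snd_conv)
    apply (intro conjI blinfun_eqI)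
     apply (simp_all add: blinfun.bilinear_simps algebra_simps)
    done
  show "a * (b + c) = a * b + a * c"
    apply transfer
    apply (simp only: prod_eq_iff fst_conv snd_conv)
    apply (intro conjI blinfun_eqI)
     apply (simp_all add: blinfun.bilinear_simps algebra_simps)
    done
  show "1 * a = a" by transfer (auto simp: prod_eq_iff)
  show "a * 1 = a" by transfer (auto simp: prod_eq_iff)
  show "(0::'a un) \<noteq> 1" by transfer (simp add: zero_prod_def)
  show "r *\<^sub>R a * b = r *\<^sub>R (a * b)"
    apply transfer
    apply (simp only: prod_eq_iff fst_conv snd_conv)
    apply (intro conjI blinfun_eqI)
     apply (simp_all add: blinfun.bilinear_simps algebra_simps)
    done
  show "a * r *\<^sub>R b = r *\<^sub>R (a * b)"
    apply transfer
    apply (simp only: prod_eq_iff fst_conv snd_conv)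
    apply (intro conjI blinfun_eqI)
     apply (simp_all add: blinfun.bilinear_simps algebra_simps)
    done
  show "norm (1::'a un) = 1" by transfer simp
  show "norm (a * b) \<le> norm a * norm b"
    by transfer (simp only: fst_conv snd_conv un_mult_ineq)
qed
end

lemma norm_fst_un: "norm (fst (rep_un x)) \<le> norm x"
  by transfer simp
lemma norm_snd_un: "\<bar>snd (rep_un x)\<bar> \<le> norm x"
  by transfer simp
lemma rep_un_diff: "rep_un (x - y) = rep_un x - rep_un y"
  by transfer simp

instance un :: (banach) banach
proof
  fix X :: "nat \<Rightarrow> 'a un"
  assume C: "Cauchy X"
  have C1: "Cauchy (\<lambda>n. fst (rep_un (X n)))"
  proof (rule metric_CauchyI)
    fix e :: real assume "0 < e"
    then obtain N where N: "\<forall>m\<ge>N. \<forall>n\<ge>N. dist (X m) (X n) < e" using C metric_CauchyD by blast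
    show "\<exists>M. \<forall>m\<ge>M. \<forall>n\<ge>M. dist (fst (rep_un (X m))) (fst (rep_un (X n))) < e"
      proof (intro exI[of _ N] allI impI)
      fix m n assume "N \<le> m" "N \<le> n"
      have "dist (fst (rep_un (X m))) (fst (rep_un (X n))) \<le> norm (X m - X n)"
        using norm_fst_un[of "X m - X n"] by (simp add: rep_un_diff dist_norm dist_real_def)
      also have "\<dots> < e" using N \<open>N \<le> m\<close> \<open>N \<le> n\<close> by (simp add: dist_norm)
      finally show "dist (fst (rep_un (X m))) (fst (rep_un (X n))) < e" .
    qed
  qed
  have C2: "Cauchy (\<lambda>n. snd (rep_un (X n)))"
  proof (rule metric_CauchyI)
    fix e :: real assume "0 < e"
    then obtain N where N: "\<forall>m\<ge>N. \<forall>n\<ge>N. dist (X m) (X n) < e" using C metric_CauchyD by blast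
    show "\<exists>M. \<forall>m\<ge>M. \<forall>n\<ge>M. dist (snd (rep_un (X m))) (snd (rep_un (X n))) < e"
      proof (intro exI[of _ N] allI impI)
      fix m n assume "N \<le> m" "N \<le> n"
      have "dist (snd (rep_un (X m))) (snd (rep_un (X n))) \<le> norm (X m - X n)"
        using norm_snd_un[of "X m - X n"] by (simp add: rep_un_diff dist_norm dist_real_def)
      also have "\<dots> < e" using N \<open>N \<le> m\<close> \<open>N \<le> n\<close> by (simp add: dist_norm)
      finally show "dist (snd (rep_un (X m))) (snd (rep_un (X n))) < e" .
    qed
  qed
  obtain T where T: "(\<lambda>n. fst (rep_un (X n))) \<longlonglongrightarrow> T" using C1 convergent_eq_Cauchy by blast
  obtain c where c: "(\<lambda>n. snd (rep_un (X n))) \<longlonglongrightarrow> c" using C2 convergent_eq_Cauchy by blast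
  have T0: "(\<lambda>n. norm (fst (rep_un (X n)) - T)) \<longlonglongrightarrow> 0"
    using T by (simp add: tendsto_norm_zero_iff LIM_zero_iff)
  have c0: "(\<lambda>n. \<bar>snd (rep_un (X n)) - c\<bar>) \<longlonglongrightarrow> 0"
    using c by (simp add: tendsto_rabs_zero_iff LIM_zero_iff)
  have S: "(\<lambda>n. norm (fst (rep_un (X n)) - T) + \<bar>snd (rep_un (X n)) - c\<bar>) \<longlonglongrightarrow> 0"
    using tendsto_add[OF T0 c0] by simp
  have E: "norm (X n - Abs_un (T, c)) = norm (fst (rep_un (X n)) - T) + \<bar>snd (rep_un (X n)) - c\<bar>" for n
    by (simp add: norm_un_def minus_un_def Abs_un_inverse)
  have "X \<longlonglongrightarrow> Abs_un (T, c)"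
    using S unfolding E[symmetric] tendsto_norm_zero_iff LIM_zero_iff .
  then show "convergent X" by (auto simp: convergent_def)
qed


lift_definition opr :: "'a::banach un \<Rightarrow> ('a \<Rightarrow>\<^sub>L 'a)" is "\<lambda>x. fst x + snd x *\<^sub>R id_blinfun" .
lift_definition emb :: "('a::banach \<Rightarrow>\<^sub>L 'a) \<Rightarrow> 'a un" is "\<lambda>T::'a \<Rightarrow>\<^sub>L 'a. (T, 0::real)" .

lemma opr_add: "opr (x + y) = opr x + opr y" by transfer (simp add: algebra_simps)
lemma opr_diff: "opr (x - y) = opr x - opr y" by transfer (simp add: algebra_simps)
lemma opr_scaleR: "opr (r *\<^sub>R x) = r *\<^sub>R opr x" by transfer (simp add: algebra_simps)
lemma opr_zero: "opr 0 = 0" by transfer simp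
lemma opr_one: "opr 1 = id_blinfun" by transfer simp
lemma opr_emb: "opr (emb T) = T" by transfer simp
lemma opr_mult: "opr (x * y) = opr x o\<^sub>L opr y"
  by transfer (auto simp: algebra_simps blinfun.bilinear_simps intro!: blinfun_eqI)
lemma emb_add: "emb (S + T) = emb S + emb T" by transfer simp
lemma emb_zero: "emb 0 = 0" using emb_add[of 0 0] by simp
lemma emb_diff: "emb (S - T) = emb S - emb T" by transfer simp
lemma emb_scaleR: "emb (r *\<^sub>R T) = r *\<^sub>R emb T" by transfer simp
lemma emb_comp: "emb (S o\<^sub>L T) = emb S * emb T" by transfer simp
lemma norm_emb: "norm (emb T) = norm T" by transfer simp
lemma norm_opr: "norm (opr x) \<le> norm x"
proof transfer
  fix x :: "('a \<Rightarrow>\<^sub>L 'a) \<times> real"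
  have "norm (fst x + snd x *\<^sub>R id_blinfun) \<le> norm (fst x) + \<bar>snd x\<bar> * norm (id_blinfun :: 'a \<Rightarrow>\<^sub>L 'a)"
    using norm_triangle_ineq[of "fst x" "snd x *\<^sub>R id_blinfun"] by simp
  also have "\<dots> \<le> norm (fst x) + \<bar>snd x\<bar>"
    using norm_blinfun_id_le[where 'a='a] by (simp add: mult_left_le)
  finally show "norm (fst x + snd x *\<^sub>R id_blinfun) \<le> norm (fst x) + \<bar>snd x\<bar>" .
qed
lemma bounded_linear_opr: "bounded_linear opr"
  by (rule bounded_linear_intro[where K=1]) (auto simp: opr_add opr_scaleR norm_opr)

lemma opr_sum: "opr (sum f A) = (\<Sum>a\<in>A. opr (f a))"
  by (induct A rule: infinite_finite_induct) (auto simp: opr_zero opr_add)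

lemma bl_pow_Suc: "bl_pow A (Suc k) = A o\<^sub>L bl_pow A k"
  by (simp add: bl_pow_def)
lemma bl_pow_0: "bl_pow A 0 = id_blinfun"
  by (simp add: bl_pow_def)

lemma bl_pow_opr: "bl_pow T k = opr (emb T ^ k)"
  by (induct k) (simp_all add: bl_pow_0 bl_pow_Suc opr_one opr_mult opr_emb)

lemma bl_exp_opr: "bl_exp T = opr (exp (emb T))"
proof -
  have "opr (exp (emb T)) = opr (\<Sum>k. emb T ^ k /\<^sub>R fact k)"
    by (simp add: exp_def)
  also have "\<dots> = (\<Sum>k. opr (emb T ^ k /\<^sub>R fact k))"
    by (rule bounded_linear.suminf[OF bounded_linear_opr summable_exp_generic])
  also have "\<dots> = (\<Sum>k. (1 / fact k) *\<^sub>R bl_pow T k)"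
    by (simp add: opr_scaleR bl_pow_opr divide_inverse_commute)
  finally show ?thesis by (simp add: bl_exp_def)
qed

lemma exp_commute:
  fixes x y :: "'b::{real_normed_algebra_1, banach}"
  assumes "x * y = y * x"
  shows "exp x * y = y * exp x"
proof -
  have "exp x * y = (\<Sum>n. x ^ n /\<^sub>R fact n * y)"
    by (simp add: exp_def suminf_mult2 summable_exp_generic)
  also have "\<dots> = (\<Sum>n. y * (x ^ n /\<^sub>R fact n))"
    using power_commuting_commutes[OF assms] by (simp add: mult_scaleR_left)
  also have "\<dots> = y * exp x"
    using suminf_mult[OF summable_exp_generic[of x], of y] by (simp add: exp_def)
  finally show ?thesis .
qed


definition N :: "'a::banach un \<Rightarrow> real" where "N x = norm (opr x)"

lemma N_mult: "N (x * y) \<le> N x * N y"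
  unfolding N_def opr_mult by (rule norm_blinfun_compose)
lemma N_add: "N (x + y) \<le> N x + N y"
  unfolding N_def opr_add by (rule norm_triangle_ineq)
lemma N_diff: "N (x - y) \<le> N x + N y"
  unfolding N_def opr_diff by (rule norm_triangle_ineq4)
lemma N_minus_commute: "N (x - y) = N (y - x)"
  unfolding N_def opr_diff by (rule norm_minus_commute)
lemma N_scaleR: "N (r *\<^sub>R x) = \<bar>r\<bar> * N x"
  unfolding N_def opr_scaleR by simp
lemma N_nonneg: "0 \<le> N x" unfolding N_def by simp
lemma N_one: "N 1 \<le> 1" unfolding N_def opr_one by (rule norm_blinfun_id_le)
lemma N_le_norm: "N x \<le> norm x" unfolding N_def by (rule norm_opr)
lemma N_emb: "N (emb T) = norm T" unfolding N_def opr_emb ..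
lemma N_sum: "N (sum f A) \<le> (\<Sum>a\<in>A. N (f a))"
  unfolding N_def opr_sum by (rule norm_sum)
lemma N_pow: "N (x ^ k) \<le> N x ^ k"
proof (induct k)
  case 0 then show ?case using N_one by simp
next
  case (Suc k)
  have "N (x ^ Suc k) \<le> N x * N (x ^ k)" using N_mult by simp
  also have "\<dots> \<le> N x * N x ^ k" using Suc N_nonneg by (intro mult_left_mono) auto
  finally show ?case by simp
qed
lemma N_mult3: "N (x * y * z) \<le> N x * N y * N z"
  by (meson N_mult N_nonneg mult_right_mono order_trans)

lemma opr_emb_opr_pow: "opr (emb (opr a) ^ n) = opr (a ^ n)"
  by (induct n) (simp_all add: opr_mult opr_emb)

lemma deriv_bound:
  fixes f :: "real \<Rightarrow> 'b::banach"
  assumes "a \<le> b"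
    and fd: "\<And>x. x \<in> {a..b} \<Longrightarrow> (f has_vector_derivative f' x) (at x within {a..b})"
    and hd: "\<And>x. x \<in> {a..b} \<Longrightarrow> (h has_real_derivative h' x) (at x within {a..b})"
    and le: "\<And>x. x \<in> {a..b} \<Longrightarrow> norm (f' x) \<le> h' x"
  shows "norm (f b - f a) \<le> h b - h a"
proof -
  have F: "(f' has_integral (f b - f a)) {a..b}"
    by (rule fundamental_theorem_of_calculus[OF \<open>a \<le> b\<close> fd])
  have H: "(h' has_integral (h b - h a)) {a..b}"
    by (rule fundamental_theorem_of_calculus[OF \<open>a \<le> b\<close>])
       (use hd in \<open>simp add: has_real_derivative_iff_has_vector_derivative\<close>)
  have "norm (integral {a..b} f') \<le> integral {a..b} h'"
    by (rule integral_norm_bound_integral) (use F H le in auto)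
  then show ?thesis using F H by (simp add: integral_unique)
qed

lemma exp_deriv:
  fixes X Y :: "'a::banach un"
  shows "((\<lambda>s. opr (exp (s *\<^sub>R X) * Y)) has_vector_derivative opr (X * exp (s *\<^sub>R X) * Y)) (at s within S)"
proof -
  have bl: "bounded_linear (\<lambda>u. opr (u * Y))"
    using bounded_linear_compose[OF bounded_linear_opr bounded_linear_mult_left[of Y]] by (simp add: o_def)
  show ?thesis
    using bounded_linear.has_vector_derivative[OF bl
        has_vector_derivative_at_within[OF exp_scaleR_has_vector_derivative_left[of X s]]]
    by simp
qed

lemma taylor1:
  fixes X Y :: "'a::banach un"
  assumes "0 \<le> \<tau>" and K: "\<And>\<sigma>. \<sigma> \<in> {0..\<tau>} \<Longrightarrow> N (exp (\<sigma> *\<^sub>R X) * Y) \<le> K"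
  shows "N (exp (\<tau> *\<^sub>R X) * Y - Y) \<le> \<tau> * N X * K"
proof -
  have "norm (opr (exp (\<tau> *\<^sub>R X) * Y) - opr (exp (0 *\<^sub>R X) * Y)) \<le> N X * K * \<tau> - N X * K * 0"
  proof (rule deriv_bound[OF \<open>0 \<le> \<tau>\<close> exp_deriv])
    fix x assume x: "x \<in> {0..\<tau>}"
    show "((\<lambda>s. N X * K * s) has_real_derivative N X * K) (at x within {0..\<tau>})"
      by (auto intro!: derivative_eq_intros)
    have "norm (opr (X * exp (x *\<^sub>R X) * Y)) \<le> N X * N (exp (x *\<^sub>R X) * Y)"
      using N_mult[of X "exp (x *\<^sub>R X) * Y"] by (simp add: N_def mult.assoc)
    also have "\<dots> \<le> N X * K" using K[OF x] N_nonneg by (intro mult_left_mono) auto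
    finally show "norm (opr (X * exp (x *\<^sub>R X) * Y)) \<le> N X * K" .
  qed
  then show ?thesis by (simp add: N_def opr_diff mult.commute mult.left_commute)
qed

lemma taylor2:
  fixes X Y :: "'a::banach un"
  assumes "0 \<le> \<tau>" and K: "\<And>\<sigma>. \<sigma> \<in> {0..\<tau>} \<Longrightarrow> N (exp (\<sigma> *\<^sub>R X) * Y) \<le> K"
  shows "N (exp (\<tau> *\<^sub>R X) * Y - Y - \<tau> *\<^sub>R (X * Y)) \<le> \<tau>\<^sup>2 * (N X)\<^sup>2 * K / 2"
proof -
  let ?f = "\<lambda>s. opr (exp (s *\<^sub>R X) * Y) - opr Y - s *\<^sub>R opr (X * Y)"
  have "norm (?f \<tau> - ?f 0) \<le> (N X)\<^sup>2 * K / 2 * \<tau>\<^sup>2 - (N X)\<^sup>2 * K / 2 * 0\<^sup>2"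
  proof (rule deriv_bound[OF \<open>0 \<le> \<tau>\<close>])
    fix x assume x: "x \<in> {0..\<tau>}"
    show "(?f has_vector_derivative (opr (X * exp (x *\<^sub>R X) * Y) - opr (X * Y))) (at x within {0..\<tau>})"
      by (auto intro!: derivative_eq_intros exp_deriv)
    show "((\<lambda>s. (N X)\<^sup>2 * K / 2 * s\<^sup>2) has_real_derivative (N X)\<^sup>2 * K * x) (at x within {0..\<tau>})"
      by (auto intro!: derivative_eq_intros)
    have "opr (X * exp (x *\<^sub>R X) * Y) - opr (X * Y) = opr (X * (exp (x *\<^sub>R X) * Y - Y))"
      by (simp add: opr_diff algebra_simps)
    then have "norm (opr (X * exp (x *\<^sub>R X) * Y) - opr (X * Y)) \<le> N X * N (exp (x *\<^sub>R X) * Y - Y)"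
      using N_mult unfolding N_def by metis
    also have "\<dots> \<le> N X * (x * N X * K)"
      using taylor1[of x X Y K] K x N_nonneg by (intro mult_left_mono) auto
    finally show "norm (opr (X * exp (x *\<^sub>R X) * Y) - opr (X * Y)) \<le> (N X)\<^sup>2 * K * x"
      by (simp add: power2_eq_square algebra_simps)
  qed
  then show ?thesis by (simp add: N_def opr_diff opr_add opr_scaleR algebra_simps)
qed



lemma pow_diff_sum:
  fixes a b :: "'b::ring_1"
  shows "a ^ n - b ^ n = (\<Sum>k<n. a ^ k * (a - b) * b ^ (n - Suc k))"
proof (induct n)
  case 0 then show ?case by simp
next
  case (Suc n)
  have "a ^ Suc n - b ^ Suc n = a ^ n * (a - b) + (a ^ n - b ^ n) * b"
    by (simp add: algebra_simps power_Suc2 power_commutes)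
  also have "(a ^ n - b ^ n) * b = (\<Sum>k<n. a ^ k * (a - b) * b ^ (Suc n - Suc k))"
    unfolding Suc sum_distrib_right
  proof (rule sum.cong)
    fix k assume "k \<in> {..<n}"
    then have "Suc n - Suc k = Suc (n - Suc k)" by auto
    then show "a ^ k * (a - b) * b ^ (n - Suc k) * b = a ^ k * (a - b) * b ^ (Suc n - Suc k)"
      by (simp add: power_Suc2 mult.assoc power_commutes)
  qed simp
  finally show ?case by (simp add: add.commute)
qed

lemma le_lim_pow:
  fixes a b C \<delta> :: real
  assumes "0 < \<delta>" "\<delta> < 1" and le: "\<And>k. k \<ge> 1 \<Longrightarrow> a \<le> b + C * \<delta> ^ k"
  shows "a \<le> b"
proof -
  have "(\<lambda>k. b + C * \<delta> ^ k) \<longlonglongrightarrow> b + C * 0"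
    using assms by (intro tendsto_intros LIMSEQ_power_zero) auto
  then have "(\<lambda>k. b + C * \<delta> ^ k) \<longlonglongrightarrow> b" by simp
  then show ?thesis
    by (rule LIMSEQ_le_const) (use le in \<open>auto intro!: exI[of _ 1]\<close>)
qed

lemma geom_le:
  fixes \<delta> :: real
  assumes "0 < \<delta>" "\<delta> < 1"
  shows "(\<Sum>j<n. \<delta> ^ Suc j) \<le> \<delta> / (1 - \<delta>)"
proof -
  have "(\<Sum>j<n. \<delta> ^ Suc j) = \<delta> * (\<Sum>j<n. \<delta> ^ j)" by (simp add: sum_distrib_left)
  also have "(\<Sum>j<n. \<delta> ^ j) = (1 - \<delta> ^ n) / (1 - \<delta>)" using assms by (simp add: sum_gp_strict)
  also have "\<dots> \<le> 1 / (1 - \<delta>)" using assms by (intro divide_right_mono) auto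
  finally show ?thesis using assms by (simp add: mult_left_mono)
qed

lemma exp_ineq:
  fixes x cp :: real
  assumes "0 \<le> x" "1 \<le> cp" "0 \<le> e" "e \<le> exp x"
  shows "x + x * e * (1 + x) \<le> 2 * exp (3 * x * cp)"
proof -
  have q: "1 + 2 * x + (2 * x)\<^sup>2 / 2 \<le> exp (2 * x)"
    using exp_lower_Taylor_quadratic[of "2 * x"] assms by simp
  have "x + x * e * (1 + x) \<le> x + x * exp x * (1 + x)"
    using assms by (intro add_left_mono mult_right_mono mult_left_mono) auto
  also have "\<dots> \<le> exp x * (2 + 4 * x + 4 * x\<^sup>2)"
  proof -
    have "1 \<le> exp x" using assms by simp
    then have h0: "x \<le> exp x * x" using assms by (simp add: mult_right_mono[of 1 "exp x" x, simplified])
    have h1: "x * exp x * (1 + x) = exp x * x + exp x * x\<^sup>2" by (simp add: algebra_simps power2_eq_square)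
    have h2: "exp x * (2 + 4 * x + 4 * x\<^sup>2) = 2 * exp x + 4 * (exp x * x) + 4 * (exp x * x\<^sup>2)"
      by (simp add: algebra_simps)
    have h3: "0 \<le> exp x * x\<^sup>2" by simp
    have h4: "0 \<le> exp x * x" using assms by simp
    show ?thesis unfolding h1 h2 using h0 h3 h4 \<open>1 \<le> exp x\<close> by linarith
  qed
  also have "\<dots> \<le> exp x * (2 * exp (2 * x))"
    using q by (intro mult_left_mono) (auto simp: power2_eq_square)
  also have "\<dots> = 2 * exp (3 * x)" by (simp add: exp_add[symmetric])
  also have "\<dots> \<le> 2 * exp (3 * x * cp)"
    using assms mult_left_mono[of 1 cp x] by simp
  finally show ?thesis .
qed



lemma emb_N0: "N (emb T) \<le> 0 \<Longrightarrow> emb T = 0"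
  by (simp add: N_emb emb_zero)

lemma core:
  fixes L M P :: "'a::banach \<Rightarrow>\<^sub>L 'a" and \<delta> t cp eb l :: real and n :: nat
  assumes contr: "\<And>s. s \<ge> 0 \<Longrightarrow> N (exp (s *\<^sub>R emb L)) \<le> 1"
    and NM: "norm M \<le> 1" and PP: "P o\<^sub>L P = P"
    and d0: "0 < \<delta>" and d1: "\<delta> < 1"
    and conv: "\<And>k. k \<ge> 1 \<Longrightarrow> N (emb M ^ k - emb P) \<le> \<delta> ^ k"
    and t0: "t \<ge> 0" and n1: "n \<ge> 1"
    and cp_def: "cp = N (1 - emb P)"
    and eb_def: "eb = (SUP s\<in>{0..t}. N (exp (s *\<^sub>R (emb P * emb L * emb P))))"
    and l_def: "l = N (emb L)"
  shows "N ((emb M * exp ((t / real n) *\<^sub>R emb L)) ^ n - exp (t *\<^sub>R (emb P * emb L * emb P)) * emb P)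
     \<le> cp * t * l / real n + (cp + (1 + eb) * (1 + cp ^ 2)) / 2 * (t ^ 2 * l ^ 2 / real n)
       + \<delta> ^ n + 2 * \<delta> / (1 - \<delta>) * (exp (3 * t * l * cp) / real n)"
proof -
  define Lu where "Lu = emb L"
  define Mu where "Mu = emb M"
  define Pu where "Pu = emb P"
  define \<tau> where "\<tau> = t / real n"
  define \<epsilon> where "\<epsilon> = \<tau> * l"
  define E where "E = exp (\<tau> *\<^sub>R Lu)"
  define A where "A = Mu * E"
  define G where "G = Pu * Lu * Pu"
  define Q where "Q = Mu - Pu"
  define X where "X = (\<lambda>j::nat. exp ((real j * \<tau>) *\<^sub>R G) * Pu)"
  define R where "R = E - 1 - \<tau> *\<^sub>R Lu"
  have PPu: "Pu * Pu = Pu" unfolding Pu_def emb_comp[symmetric] PP ..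
  have NMu: "N Mu \<le> 1" unfolding Mu_def N_emb by (rule NM)
  have l0: "0 \<le> l" unfolding l_def by (rule N_nonneg)
  have tau0: "0 \<le> \<tau>" using t0 by (simp add: \<tau>_def)
  have eps0: "0 \<le> \<epsilon>" using tau0 l0 by (simp add: \<epsilon>_def)
  have ntau: "real n * \<tau> = t" using n1 by (simp add: \<tau>_def)
  have convu: "\<And>k. k \<ge> 1 \<Longrightarrow> N (Mu ^ k - Pu) \<le> \<delta> ^ k" using conv by (simp add: Mu_def Pu_def)
  have NMk: "N (Mu ^ k) \<le> 1" for k
    using N_pow[of Mu k] power_le_one[OF N_nonneg NMu, of k] by linarith
  have NP: "N Pu \<le> 1"
  proof (rule le_lim_pow[OF d0 d1, of _ 1 1])
    fix k :: nat assume k: "k \<ge> 1"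
    have "N Pu = N (Mu ^ k - (Mu ^ k - Pu))" by simp
    also have "\<dots> \<le> N (Mu ^ k) + N (Mu ^ k - Pu)" by (rule N_diff)
    also have "\<dots> \<le> 1 + 1 * \<delta> ^ k" using NMk[of k] convu[OF k] by simp
    finally show "N Pu \<le> 1 + 1 * \<delta> ^ k" .
  qed
  have emb0: "emb T = 0" if "N (emb T) \<le> 0" for T
    using that by (simp add: N_emb emb_zero)
  have MP: "Mu * Pu = Pu"
  proof -
    have "N (Mu * Pu - Pu) \<le> 0"
    proof (rule le_lim_pow[OF d0 d1, of _ 0 2])
      fix k :: nat assume k: "k \<ge> 1"
      have eq: "Mu * Pu - Pu = Mu * (Pu - Mu ^ k) + (Mu ^ Suc k - Pu)" by (simp add: algebra_simps power_Suc2 power_commutes)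
      have dk: "\<delta> ^ Suc k \<le> \<delta> ^ k" using d0 d1 by (simp add: power_decreasing)
      have pk: "N (Pu - Mu ^ k) \<le> \<delta> ^ k" using convu[OF k] N_minus_commute[of Pu "Mu ^ k"] by simp
      have h1: "N (Mu * Pu - Pu) \<le> N (Mu * (Pu - Mu ^ k)) + N (Mu ^ Suc k - Pu)" unfolding eq by (rule N_add)
      have h2: "N (Mu * (Pu - Mu ^ k)) \<le> N Mu * N (Pu - Mu ^ k)" by (rule N_mult)
      have h3: "N Mu * N (Pu - Mu ^ k) \<le> 1 * \<delta> ^ k" using pk NMu N_nonneg[of Mu] N_nonneg[of "Pu - Mu ^ k"] by (intro mult_mono) auto
      have h4: "N (Mu ^ Suc k - Pu) \<le> \<delta> ^ k" using convu[of "Suc k"] dk by simp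
      show "N (Mu * Pu - Pu) \<le> 0 + 2 * \<delta> ^ k" using h1 h2 h3 h4 by linarith
    qed
    then have "N (emb ((M o\<^sub>L P) - P)) \<le> 0" by (simp add: emb_diff emb_comp Mu_def Pu_def)
    then have "emb ((M o\<^sub>L P) - P) = 0" by (rule emb_N0)
    then show ?thesis by (simp add: emb_diff emb_comp Mu_def Pu_def)
  qed
  have PM: "Pu * Mu = Pu"
  proof -
    have "N (Pu * Mu - Pu) \<le> 0"
    proof (rule le_lim_pow[OF d0 d1, of _ 0 2])
      fix k :: nat assume k: "k \<ge> 1"
      have eq: "Pu * Mu - Pu = (Pu - Mu ^ k) * Mu + (Mu ^ Suc k - Pu)" by (simp add: algebra_simps power_Suc2 power_commutes)
      have dk: "\<delta> ^ Suc k \<le> \<delta> ^ k" using d0 d1 by (simp add: power_decreasing)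
      have pk: "N (Pu - Mu ^ k) \<le> \<delta> ^ k" using convu[OF k] N_minus_commute[of Pu "Mu ^ k"] by simp
      have h1: "N (Pu * Mu - Pu) \<le> N ((Pu - Mu ^ k) * Mu) + N (Mu ^ Suc k - Pu)" unfolding eq by (rule N_add)
      have h2: "N ((Pu - Mu ^ k) * Mu) \<le> N (Pu - Mu ^ k) * N Mu" by (rule N_mult)
      have h3: "N (Pu - Mu ^ k) * N Mu \<le> \<delta> ^ k * 1" using pk NMu N_nonneg[of Mu] N_nonneg[of "Pu - Mu ^ k"] by (intro mult_mono) auto
      have h4: "N (Mu ^ Suc k - Pu) \<le> \<delta> ^ k" using convu[of "Suc k"] dk by simp
      show "N (Pu * Mu - Pu) \<le> 0 + 2 * \<delta> ^ k" using h1 h2 h3 h4 by linarith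
    qed
    then have "N (emb ((P o\<^sub>L M) - P)) \<le> 0" by (simp add: emb_diff emb_comp Mu_def Pu_def)
    then have "emb ((P o\<^sub>L M) - P) = 0" by (rule emb_N0)
    then show ?thesis by (simp add: emb_diff emb_comp Mu_def Pu_def)
  qed
  have PQ: "Pu * Q = 0" unfolding Q_def by (simp add: algebra_simps PM PPu)
  have QP: "Q * Pu = 0" unfolding Q_def by (simp add: algebra_simps MP PPu)
  have NQ: "N Q \<le> \<delta>" using convu[of 1] by (simp add: Q_def)
  have MjP: "Mu ^ j * Pu = Pu" for j
    by (induct j) (simp_all add: power_Suc2 mult.assoc MP)
  have MjQ: "N (Mu ^ i * Q) \<le> \<delta> ^ Suc i" for i
  proof -
    have "Mu ^ i * Q = Mu ^ Suc i - Pu" by (simp add: Q_def algebra_simps MjP power_Suc2 power_commutes)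
    then show ?thesis using convu[of "Suc i"] by simp
  qed
  define w where "w = (\<lambda>j::nat. if j = 0 then cp else \<delta> ^ j)"
  have Mj1P: "N (Mu ^ j * (1 - Pu)) \<le> w j" for j
  proof -
    have "Mu ^ j * (1 - Pu) = Mu ^ j - Pu" by (simp add: algebra_simps MjP)
    then show ?thesis using convu[of j] by (cases "j = 0") (auto simp: w_def cp_def Pu_def)
  qed
  have NE: "N E \<le> 1" unfolding E_def Lu_def using contr tau0 by simp
  have NA: "N A \<le> 1" unfolding A_def using N_mult[of Mu E] NMu NE N_nonneg[of E]
    by (meson mult_le_one order_trans)
  have NAk: "N (A ^ k) \<le> 1" for k
    using N_pow[of A k] power_le_one[OF N_nonneg NA, of k] by linarith
  have NE1: "N (E - 1) \<le> \<epsilon>"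
    using taylor1[OF tau0, of Lu 1 1] contr by (simp add: E_def \<epsilon>_def l_def Lu_def)
  have NR: "N R \<le> \<epsilon>\<^sup>2 / 2"
    using taylor2[OF tau0, of Lu 1 1] contr
    by (simp add: R_def E_def \<epsilon>_def l_def Lu_def power_mult_distrib)
  have AM: "A - Mu = Mu * (E - 1)" by (simp add: A_def algebra_simps)
  have NAM: "N (A - Mu) \<le> \<epsilon>"
  proof -
    have "N (Mu * (E - 1)) \<le> N Mu * N (E - 1)" by (rule N_mult)
    also have "\<dots> \<le> 1 * \<epsilon>" using NMu NE1 N_nonneg eps0 by (intro mult_mono) auto
    finally show ?thesis by (simp add: AM)
  qed
  have geo: "(\<Sum>j<m. \<delta> ^ Suc j) \<le> \<delta> / (1 - \<delta>)" for m by (rule geom_le[OF d0 d1])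
  have sumbound: "N (\<Sum>k<m. A ^ k * (A - Mu) * W (m - Suc k)) \<le> \<epsilon> * (\<Sum>j<m. N (W j))" for m and W :: "nat \<Rightarrow> 'a un"
  proof -
    have "N (\<Sum>k<m. A ^ k * (A - Mu) * W (m - Suc k)) \<le> (\<Sum>k<m. N (A ^ k * (A - Mu) * W (m - Suc k)))"
      by (rule N_sum)
    also have "\<dots> \<le> (\<Sum>k<m. \<epsilon> * N (W (m - Suc k)))"
    proof (rule sum_mono)
      fix k assume "k \<in> {..<m}"
      have "N (A ^ k * (A - Mu) * W (m - Suc k)) \<le> N (A ^ k) * N (A - Mu) * N (W (m - Suc k))" by (rule N_mult3)
      also have "\<dots> \<le> 1 * \<epsilon> * N (W (m - Suc k))"
        using NAk[of k] NAM N_nonneg eps0 by (intro mult_mono) auto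
      finally show "N (A ^ k * (A - Mu) * W (m - Suc k)) \<le> \<epsilon> * N (W (m - Suc k))" by simp
    qed
    also have "\<dots> = \<epsilon> * (\<Sum>j<m. N (W j))"
      using sum.nat_diff_reindex[of "\<lambda>j. N (W j)" m] by (simp add: sum_distrib_left[symmetric])
    finally show ?thesis .
  qed
  have AmQ: "N (A ^ m * Q) \<le> \<delta> ^ Suc m + \<epsilon> * (\<delta> / (1 - \<delta>))" for m
  proof -
    define S where "S = (\<Sum>k<m. A ^ k * (A - Mu) * (Mu ^ (m - Suc k) * Q))"
    have "S = (\<Sum>k<m. A ^ k * (A - Mu) * Mu ^ (m - Suc k)) * Q"
      unfolding S_def sum_distrib_right by (simp add: mult.assoc)
    also have "\<dots> = (A ^ m - Mu ^ m) * Q" by (simp only: pow_diff_sum[of A m Mu])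
    finally have eq: "A ^ m * Q = Mu ^ m * Q + S" by (simp add: algebra_simps)
    have "N (A ^ m * Q) \<le> N (Mu ^ m * Q) + N S" unfolding eq by (rule N_add)
    moreover have "N S \<le> \<epsilon> * (\<Sum>j<m. N (Mu ^ j * Q))"
      unfolding S_def by (rule sumbound)
    moreover have "(\<Sum>j<m. N (Mu ^ j * Q)) \<le> (\<Sum>j<m. \<delta> ^ Suc j)"
      using MjQ by (intro sum_mono) auto
    moreover have "\<epsilon> * (\<Sum>j<m. N (Mu ^ j * Q)) \<le> \<epsilon> * (\<delta> / (1 - \<delta>))"
      using calculation(3) geo[of m] eps0 by (intro mult_left_mono) auto
    ultimately show ?thesis using MjQ[of m] by linarith
  qed
  have cp0: "0 \<le> cp" unfolding cp_def by (rule N_nonneg)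
  have AmQ0: "N (A ^ m * Q) \<le> 0" if "cp = 0" for m
  proof -
    have "Q = Q * (1 - Pu)" by (simp add: algebra_simps QP)
    then have "A ^ m * Q = (A ^ m * Q) * (1 - Pu)" by (simp add: mult.assoc)
    then have "N (A ^ m * Q) \<le> N (A ^ m * Q) * cp" using N_mult[of "A ^ m * Q" "1 - Pu"]
      unfolding cp_def Pu_def by simp
    then show ?thesis using that by simp
  qed
  have part1: "N (A ^ n * (1 - Pu)) \<le> \<delta> ^ n + \<epsilon> * (cp + \<delta> / (1 - \<delta>))"
  proof -
    define S where "S = (\<Sum>k<n. A ^ k * (A - Mu) * (Mu ^ (n - Suc k) * (1 - Pu)))"
    have "S = (\<Sum>k<n. A ^ k * (A - Mu) * Mu ^ (n - Suc k)) * (1 - Pu)"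
      unfolding S_def sum_distrib_right by (simp add: mult.assoc)
    also have "\<dots> = (A ^ n - Mu ^ n) * (1 - Pu)" by (simp only: pow_diff_sum[of A n Mu])
    finally have eq: "A ^ n * (1 - Pu) = Mu ^ n * (1 - Pu) + S" by (simp add: algebra_simps)
    have "(\<Sum>j<n. w j) \<le> cp + \<delta> / (1 - \<delta>)"
    proof -
      obtain n' where n': "n = Suc n'" using n1 by (cases n) auto
      have "(\<Sum>j<n. w j) = w 0 + (\<Sum>j<n'. w (Suc j))" unfolding n' by (rule sum.lessThan_Suc_shift)
      also have "\<dots> = cp + (\<Sum>j<n'. \<delta> ^ Suc j)" by (simp add: w_def)
      finally show ?thesis using geo[of n'] by simp
    qed
    have "N (A ^ n * (1 - Pu)) \<le> N (Mu ^ n * (1 - Pu)) + N S" unfolding eq by (rule N_add)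
    moreover have "N S \<le> \<epsilon> * (\<Sum>j<n. N (Mu ^ j * (1 - Pu)))"
      unfolding S_def by (rule sumbound)
    moreover have "(\<Sum>j<n. N (Mu ^ j * (1 - Pu))) \<le> (\<Sum>j<n. w j)"
      using Mj1P by (intro sum_mono) auto
    moreover have "\<epsilon> * (\<Sum>j<n. N (Mu ^ j * (1 - Pu))) \<le> \<epsilon> * (cp + \<delta> / (1 - \<delta>))"
      using calculation(3) \<open>(\<Sum>j<n. w j) \<le> cp + \<delta> / (1 - \<delta>)\<close> eps0 by (intro mult_left_mono) auto
    moreover have "N (Mu ^ n * (1 - Pu)) \<le> \<delta> ^ n" using Mj1P[of n] n1 by (simp add: w_def)
    ultimately show ?thesis by linarith
  qed
  have part1_0: "N (A ^ n * (1 - Pu)) \<le> 0" if "cp = 0"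
    using N_mult[of "A ^ n" "1 - Pu"] that by (simp add: cp_def Pu_def)
  have PG: "Pu * G = G" by (simp add: G_def mult.assoc[symmetric] PPu)
  have GP: "G * Pu = G" by (simp add: G_def mult.assoc PPu)
  have Gemb: "G = emb ((P o\<^sub>L L) o\<^sub>L P)" by (simp add: G_def Pu_def Lu_def emb_comp)
  have NG: "N G \<le> l"
  proof -
    have "N G \<le> N Pu * N Lu * N Pu" unfolding G_def by (rule N_mult3)
    also have "\<dots> \<le> 1 * l * 1" using NP l0 N_nonneg[of Pu] by (intro mult_mono) (auto simp: l_def Lu_def)
    finally show ?thesis by simp
  qed
  have normG: "norm G = N G" unfolding Gemb N_emb norm_emb ..
  have expG_bound: "N (exp (s *\<^sub>R G)) \<le> exp (t * l)" if "s \<in> {0..t}" for s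
  proof -
    have "N (exp (s *\<^sub>R G)) \<le> norm (exp (s *\<^sub>R G))" by (rule N_le_norm)
    also have "\<dots> \<le> exp (norm (s *\<^sub>R G))" by (rule norm_exp)
    also have "norm (s *\<^sub>R G) = s * N G" using that by (simp add: normG)
    also have "s * N G \<le> t * l" using that NG N_nonneg[of G] l0 by (intro mult_mono) auto
    finally show ?thesis by simp
  qed
  have bdd: "bdd_above ((\<lambda>s. N (exp (s *\<^sub>R G))) ` {0..t})"
    using expG_bound by (intro bdd_aboveI2) auto
  have ebG: "eb = (SUP s\<in>{0..t}. N (exp (s *\<^sub>R G)))" by (simp add: eb_def G_def Pu_def Lu_def)
  have ebU: "N (exp (s *\<^sub>R G)) \<le> eb" if "s \<in> {0..t}" for s
    unfolding ebG using bdd that by (rule cSUP_upper2) simp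
  have eb_le: "eb \<le> exp (t * l)"
    unfolding ebG using expG_bound t0 by (intro cSUP_least) auto
  have eb0: "0 \<le> eb" using ebU[of 0] t0 N_nonneg[of "exp (0 *\<^sub>R G)"] by simp
  have expG_comm: "Pu * exp (s *\<^sub>R G) = exp (s *\<^sub>R G) * Pu" for s
    by (rule exp_commute[symmetric]) (simp add: PG GP)
  have PX: "Pu * X j = X j" for j
    unfolding X_def by (simp add: mult.assoc[symmetric] expG_comm) (simp add: mult.assoc PPu)
  have expG_add: "exp (a *\<^sub>R G) * exp (b *\<^sub>R G) = exp ((a + b) *\<^sub>R G)" for a b
    by (simp add: exp_add_commuting[symmetric] scaleR_add_left)
  have XS: "X (Suc j) = exp (\<tau> *\<^sub>R G) * X j" for j
    unfolding X_def by (simp add: mult.assoc[symmetric] expG_add algebra_simps)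
  have X0: "X 0 = Pu" by (simp add: X_def)
  have Xn: "X n = exp (t *\<^sub>R G) * Pu" by (simp add: X_def ntau)
  have NX: "N (exp (\<sigma> *\<^sub>R G) * X j) \<le> eb" if "0 \<le> \<sigma>" "\<sigma> + real j * \<tau> \<le> t" for \<sigma> j
  proof -
    have "exp (\<sigma> *\<^sub>R G) * X j = exp ((\<sigma> + real j * \<tau>) *\<^sub>R G) * Pu"
      by (simp add: X_def mult.assoc[symmetric] expG_add)
    then have "N (exp (\<sigma> *\<^sub>R G) * X j) \<le> N (exp ((\<sigma> + real j * \<tau>) *\<^sub>R G)) * N Pu"
      by (simp add: N_mult)
    also have "\<dots> \<le> eb * 1"
      using ebU[of "\<sigma> + real j * \<tau>"] that tau0 NP N_nonneg eb0 by (intro mult_mono) auto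
    finally show ?thesis by simp
  qed
  have NXj: "N (X j) \<le> eb" if "j \<le> n" for j
  proof -
    have "real j * \<tau> \<le> real n * \<tau>" using that tau0 by (intro mult_right_mono) auto
    then show ?thesis using NX[of 0 j] ntau by (simp add: X_def)
  qed
  have tay: "N (exp (\<tau> *\<^sub>R G) * X j - X j - \<tau> *\<^sub>R (G * X j)) \<le> \<epsilon>\<^sup>2 * eb / 2" if "j < n" for j
  proof -
    have "N (exp (\<tau> *\<^sub>R G) * X j - X j - \<tau> *\<^sub>R (G * X j)) \<le> \<tau>\<^sup>2 * (N G)\<^sup>2 * eb / 2"
    proof (rule taylor2[OF tau0])
      fix \<sigma> assume \<sigma>: "\<sigma> \<in> {0..\<tau>}"
      have "real (Suc j) * \<tau> \<le> real n * \<tau>" using that tau0 by (intro mult_right_mono) auto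
      then have "\<sigma> + real j * \<tau> \<le> t" using \<sigma> ntau by (simp add: algebra_simps)
      then show "N (exp (\<sigma> *\<^sub>R G) * X j) \<le> eb" using NX \<sigma> by auto
    qed
    also have "\<dots> \<le> \<tau>\<^sup>2 * l\<^sup>2 * eb / 2"
      using NG N_nonneg[of G] eb0 by (intro divide_right_mono mult_right_mono mult_left_mono power_mono) auto
    finally show ?thesis by (simp add: \<epsilon>_def power_mult_distrib)
  qed
  have step: "A * X j - X (Suc j) = \<tau> *\<^sub>R (Q * (Lu * X j)) + Mu * R * X j
      - (exp (\<tau> *\<^sub>R G) * X j - X j - \<tau> *\<^sub>R (G * X j))" for j
  proof -
    have Ed: "E = 1 + \<tau> *\<^sub>R Lu + R" by (simp add: R_def)
    have e1: "A * X j = Mu * X j + \<tau> *\<^sub>R (Mu * Lu * X j) + Mu * R * X j"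
      by (simp add: A_def Ed algebra_simps)
    have e2: "Mu * X j = X j" by (metis PX MP mult.assoc)
    have e4: "Pu * Lu * X j = G * X j" by (metis PX G_def mult.assoc)
    have e3: "Mu * Lu * X j = G * X j + Q * (Lu * X j)"
    proof -
      have "Mu = Pu + Q" by (simp add: Q_def)
      then have "Mu * Lu * X j = Pu * Lu * X j + Q * (Lu * X j)" by (simp add: algebra_simps)
      then show ?thesis by (simp add: e4)
    qed
    show ?thesis unfolding XS e1 e2 e3 by (simp add: algebra_simps)
  qed
  define c where "c = (\<lambda>m::nat. if cp = 0 then 0 else \<delta> ^ Suc m + \<epsilon> * (\<delta> / (1 - \<delta>)))"
  have AmQc: "N (A ^ m * Q) \<le> c m" for m using AmQ AmQ0 by (simp add: c_def)
  have c0: "0 \<le> c m" for m using N_nonneg AmQc order_trans by blast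
  have termb: "N (A ^ (n - Suc j) * (A * X j - X (Suc j))) \<le> c (n - Suc j) * \<epsilon> * eb + \<epsilon>\<^sup>2 * eb"
    if "j < n" for j
  proof -
    define m where "m = n - Suc j"
    define T where "T = exp (\<tau> *\<^sub>R G) * X j - X j - \<tau> *\<^sub>R (G * X j)"
    have eq: "A ^ m * (A * X j - X (Suc j)) = \<tau> *\<^sub>R (A ^ m * Q * (Lu * X j)) + A ^ m * Mu * R * X j - A ^ m * T"
      unfolding step T_def by (simp add: algebra_simps)
    have Xj: "N (X j) \<le> eb" using NXj that by simp
    have b1: "N (\<tau> *\<^sub>R (A ^ m * Q * (Lu * X j))) \<le> c m * \<epsilon> * eb"
    proof -
      have "N (A ^ m * Q * (Lu * X j)) \<le> N (A ^ m * Q) * N Lu * N (X j)"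
        by (metis N_mult3 mult.assoc)
      also have "\<dots> \<le> c m * l * eb"
        using AmQc[of m] Xj N_nonneg c0 l0 by (intro mult_mono) (auto simp: l_def Lu_def)
      finally have h: "N (A ^ m * Q * (Lu * X j)) \<le> c m * l * eb" .
      have "N (\<tau> *\<^sub>R (A ^ m * Q * (Lu * X j))) = \<tau> * N (A ^ m * Q * (Lu * X j))"
        using tau0 by (simp add: N_scaleR)
      also have "\<dots> \<le> \<tau> * (c m * l * eb)" using h tau0 by (rule mult_left_mono)
      finally show ?thesis by (simp add: \<epsilon>_def algebra_simps)
    qed
    have b2: "N (A ^ m * Mu * R * X j) \<le> \<epsilon>\<^sup>2 / 2 * eb"
    proof -
      have h1: "N (A ^ m * Mu * R * X j) \<le> N (A ^ m * Mu * R) * N (X j)" by (rule N_mult)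
      have h2: "N (A ^ m * Mu * R) \<le> N (A ^ m * Mu) * N R" by (rule N_mult)
      have h3: "N (A ^ m * Mu) \<le> N (A ^ m) * N Mu" by (rule N_mult)
      have h4: "N (A ^ m) * N Mu \<le> 1" using NAk[of m] N_nonneg[of Mu] NMu by (rule mult_le_one)
      have h5: "N (A ^ m * Mu * R) \<le> \<epsilon>\<^sup>2 / 2"
      proof -
        have "N (A ^ m * Mu) * N R \<le> 1 * N R" using h3 h4 N_nonneg[of R] by (intro mult_right_mono) auto
        then show ?thesis using h2 NR by linarith
      qed
      have "N (A ^ m * Mu * R) * N (X j) \<le> \<epsilon>\<^sup>2 / 2 * eb"
        using h5 Xj N_nonneg by (intro mult_mono) auto
      then show ?thesis using h1 by linarith
    qed
    have b3: "N (A ^ m * T) \<le> \<epsilon>\<^sup>2 * eb / 2"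
    proof -
      have "N (A ^ m * T) \<le> N (A ^ m) * N T" by (rule N_mult)
      also have "\<dots> \<le> 1 * (\<epsilon>\<^sup>2 * eb / 2)"
        using NAk tay[OF that] N_nonneg by (intro mult_mono) (auto simp: T_def)
      finally show ?thesis by simp
    qed
    have s1: "N (A ^ m * (A * X j - X (Suc j))) \<le> N (\<tau> *\<^sub>R (A ^ m * Q * (Lu * X j)) + A ^ m * Mu * R * X j) + N (A ^ m * T)"
      unfolding eq by (rule N_diff)
    have s2: "N (\<tau> *\<^sub>R (A ^ m * Q * (Lu * X j)) + A ^ m * Mu * R * X j) \<le> N (\<tau> *\<^sub>R (A ^ m * Q * (Lu * X j))) + N (A ^ m * Mu * R * X j)"
      by (rule N_add)
    have "N (A ^ m * (A * X j - X (Suc j))) \<le> c m * \<epsilon> * eb + \<epsilon>\<^sup>2 * eb"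
      using s1 s2 b1 b2 b3 by linarith
    then show ?thesis unfolding m_def .
  qed
  have tel: "A ^ n * X 0 - X n = (\<Sum>j<n. A ^ (n - Suc j) * (A * X j - X (Suc j)))"
  proof -
    have "(\<Sum>j<n. A ^ (n - j) * X j - A ^ (n - Suc j) * X (Suc j)) = A ^ (n - 0) * X 0 - A ^ (n - n) * X n"
      by (rule sum_lessThan_telescope'[where f="\<lambda>j. A ^ (n - j) * X j"])
    moreover have "(\<Sum>j<n. A ^ (n - j) * X j - A ^ (n - Suc j) * X (Suc j)) = (\<Sum>j<n. A ^ (n - Suc j) * (A * X j - X (Suc j)))"
    proof (rule sum.cong)
      fix j assume "j \<in> {..<n}"
      then have "n - j = Suc (n - Suc j)" by auto
      then have "A ^ (n - j) = A ^ (n - Suc j) * A" by (simp only: power_Suc2)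
      then show "A ^ (n - j) * X j - A ^ (n - Suc j) * X (Suc j) = A ^ (n - Suc j) * (A * X j - X (Suc j))"
        by (simp only: mult.assoc right_diff_distrib)
    qed simp
    ultimately show ?thesis by simp
  qed
  have decomp: "A ^ n - exp (t *\<^sub>R G) * Pu = A ^ n * (1 - Pu) + (A ^ n * X 0 - X n)"
    by (simp add: X0 Xn algebra_simps)
  have part2: "N (A ^ n * X 0 - X n) \<le> \<epsilon> * eb * (\<Sum>j<n. c j) + real n * (\<epsilon>\<^sup>2 * eb)"
  proof -
    have "N (A ^ n * X 0 - X n) \<le> (\<Sum>j<n. N (A ^ (n - Suc j) * (A * X j - X (Suc j))))"
      unfolding tel by (rule N_sum)
    also have "\<dots> \<le> (\<Sum>j<n. c (n - Suc j) * \<epsilon> * eb + \<epsilon>\<^sup>2 * eb)"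
      using termb by (intro sum_mono) auto
    also have "\<dots> = \<epsilon> * eb * (\<Sum>j<n. c (n - Suc j)) + real n * (\<epsilon>\<^sup>2 * eb)"
      by (simp add: sum.distrib sum_distrib_left algebra_simps)
    also have "(\<Sum>j<n. c (n - Suc j)) = (\<Sum>j<n. c j)"
      by (rule sum.nat_diff_reindex)
    finally show ?thesis .
  qed
  have csum: "(\<Sum>j<n. c j) \<le> \<delta> / (1 - \<delta>) * (1 + real n * \<epsilon>)" if "cp \<noteq> 0"
  proof -
    have "(\<Sum>j<n. c j) = (\<Sum>j<n. \<delta> ^ Suc j) + real n * (\<epsilon> * (\<delta> / (1 - \<delta>)))"
      using that by (simp add: c_def sum.distrib)
    also have "\<dots> \<le> \<delta> / (1 - \<delta>) + real n * (\<epsilon> * (\<delta> / (1 - \<delta>)))"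
      using geo by simp
    finally show ?thesis by (simp add: algebra_simps)
  qed
  have csum0: "(\<Sum>j<n. c j) = 0" if "cp = 0" using that by (simp add: c_def)
  have main: "N (A ^ n - exp (t *\<^sub>R G) * Pu) \<le> N (A ^ n * (1 - Pu)) + N (A ^ n * X 0 - X n)"
    unfolding decomp by (rule N_add)
  define x where "x = t * l"
  have x0: "0 \<le> x" using t0 l0 by (simp add: x_def)
  have eps_eq: "\<epsilon> = x / real n" by (simp add: \<epsilon>_def \<tau>_def x_def)
  have neps: "real n * \<epsilon> = x" using n1 by (simp add: eps_eq)
  have neps2: "real n * \<epsilon>\<^sup>2 = t\<^sup>2 * l\<^sup>2 / real n"
    using n1 by (simp add: eps_eq x_def power2_eq_square field_simps)
  have nn: "0 < real n" using n1 by simp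
  have dd: "0 \<le> \<delta> / (1 - \<delta>)" using d0 d1 by simp
  have lastnn: "0 \<le> 2 * \<delta> / (1 - \<delta>) * (exp (3 * t * l * cp) / real n)"
    using d0 d1 nn by simp
  have goal_eq: "N ((emb M * exp ((t / real n) *\<^sub>R emb L)) ^ n - exp (t *\<^sub>R (emb P * emb L * emb P)) * emb P)
      = N (A ^ n - exp (t *\<^sub>R G) * Pu)"
    by (simp add: A_def E_def Mu_def Lu_def Pu_def G_def \<tau>_def)
  show ?thesis
  proof (cases "cp = 0")
    case True
    have Pid: "P = id_blinfun"
    proof -
      have "norm (id_blinfun - P) = 0" using True by (simp add: cp_def N_def opr_diff opr_one opr_emb)
      then show ?thesis by simp
    qed
    have "(id_blinfun o\<^sub>L L) o\<^sub>L id_blinfun = L" by (rule blinfun_eqI) simp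
    then have GL: "G = Lu" by (simp add: G_def Pu_def Lu_def Pid emb_comp[symmetric])
    have eb1: "eb \<le> 1"
      unfolding ebG GL Lu_def using contr t0 by (intro cSUP_least) auto
    have "N (A ^ n - exp (t *\<^sub>R G) * Pu) \<le> real n * (\<epsilon>\<^sup>2 * eb)"
      using main part1_0[OF True] part2 csum0[OF True] by simp
    also have "\<dots> = eb * (t\<^sup>2 * l\<^sup>2 / real n)" using neps2 by (simp add: algebra_simps)
    also have "\<dots> \<le> (cp + (1 + eb) * (1 + cp ^ 2)) / 2 * (t ^ 2 * l ^ 2 / real n)"
      using eb1 True nn by (intro mult_right_mono) auto
    finally have F: "N (A ^ n - exp (t *\<^sub>R G) * Pu) \<le> (cp + (1 + eb) * (1 + cp ^ 2)) / 2 * (t ^ 2 * l ^ 2 / real n)" .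
    have dn: "0 \<le> \<delta> ^ n" using d0 by simp
    have z: "cp * t * l / real n = 0" using True by simp
    show ?thesis unfolding goal_eq using F lastnn dn z by linarith
  next
    case False
    have cp1: "1 \<le> cp"
    proof -
      have "(1 - Pu) * (1 - Pu) = 1 - Pu" by (simp add: algebra_simps PPu)
      then have "cp \<le> cp * cp" using N_mult[of "1 - Pu" "1 - Pu"] by (simp add: cp_def Pu_def)
      then show ?thesis using False cp0 by (simp add: mult_le_cancel_left1)
    qed
    have ebx: "eb \<le> exp x" using eb_le by (simp add: x_def)
    have key: "x + x * eb * (1 + x) \<le> 2 * exp (3 * x * cp)" by (rule exp_ineq[OF x0 cp1 eb0 ebx])
    have "N (A ^ n - exp (t *\<^sub>R G) * Pu) \<le> (\<delta> ^ n + \<epsilon> * (cp + \<delta> / (1 - \<delta>)))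
        + (\<epsilon> * eb * (\<delta> / (1 - \<delta>) * (1 + real n * \<epsilon>)) + real n * (\<epsilon>\<^sup>2 * eb))"
    proof -
      have "\<epsilon> * eb * (\<Sum>j<n. c j) \<le> \<epsilon> * eb * (\<delta> / (1 - \<delta>) * (1 + real n * \<epsilon>))"
        using csum[OF False] eps0 eb0 by (intro mult_left_mono) auto
      then show ?thesis using main part1 part2 by linarith
    qed
    also have "\<dots> = cp * t * l / real n + eb * (t\<^sup>2 * l\<^sup>2 / real n) + \<delta> ^ n
        + \<delta> / (1 - \<delta>) * ((x + x * eb * (1 + x)) / real n)"
    proof -
      define d where "d = \<delta> / (1 - \<delta>)"
      have p0: "\<epsilon> * (cp + d) = \<epsilon> * cp + \<epsilon> * d" by (simp add: distrib_left)
      have p1: "\<epsilon> * cp = cp * t * l / real n" by (simp add: eps_eq x_def)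
      have p2: "real n * (\<epsilon>\<^sup>2 * eb) = eb * (t\<^sup>2 * l\<^sup>2 / real n)" using neps2 by (simp add: algebra_simps)
      have p3: "\<epsilon> * d + \<epsilon> * eb * (d * (1 + x)) = d * ((x + x * eb * (1 + x)) / real n)"
        by (simp add: eps_eq algebra_simps add_divide_distrib)
      show ?thesis unfolding neps d_def[symmetric] using p0 p1 p2 p3 by linarith
    qed
    also have "\<dots> \<le> cp * t * l / real n + (cp + (1 + eb) * (1 + cp ^ 2)) / 2 * (t ^ 2 * l ^ 2 / real n) + \<delta> ^ n
        + 2 * \<delta> / (1 - \<delta>) * (exp (3 * t * l * cp) / real n)"
    proof -
      have "eb \<le> (cp + (1 + eb) * (1 + cp ^ 2)) / 2"
      proof -
        have "1 \<le> cp ^ 2" using cp1 by (simp add: one_le_power)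
        then have "(1 + eb) * 2 \<le> (1 + eb) * (1 + cp ^ 2)" using eb0 by (intro mult_left_mono) auto
        then show ?thesis using cp0 by simp
      qed
      then have A1: "eb * (t\<^sup>2 * l\<^sup>2 / real n) \<le> (cp + (1 + eb) * (1 + cp ^ 2)) / 2 * (t ^ 2 * l ^ 2 / real n)"
        using nn by (intro mult_right_mono) auto
      have "(x + x * eb * (1 + x)) / real n \<le> 2 * exp (3 * x * cp) / real n"
        using key nn by (intro divide_right_mono) auto
      then have A2: "\<delta> / (1 - \<delta>) * ((x + x * eb * (1 + x)) / real n) \<le> \<delta> / (1 - \<delta>) * (2 * exp (3 * x * cp) / real n)"
        using dd by (intro mult_left_mono) auto
      have A3: "\<delta> / (1 - \<delta>) * (2 * exp (3 * x * cp) / real n) = 2 * \<delta> / (1 - \<delta>) * (exp (3 * t * l * cp) / real n)"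
        by (simp add: x_def algebra_simps)
      show ?thesis using A1 A2 A3 by linarith
    qed
    finally show ?thesis unfolding goal_eq .
  qed
qed


theorem proposition3p1:
  fixes L M P :: "'a::banach \<Rightarrow>\<^sub>L 'a" and \<delta> t :: real and n :: nat
  assumes contractive_semigroup: "\<And>s. s \<ge> 0 \<Longrightarrow> norm (bl_exp (s *\<^sub>R L)) \<le> 1"
    and M_contraction: "norm M \<le> 1"
    and P_projection: "P o\<^sub>L P = P"
    and \<delta>_range: "0 < \<delta>" "\<delta> < 1"
    and M_conv: "\<And>k::nat. k \<ge> 1 \<Longrightarrow> norm (bl_pow M k - P) \<le> \<delta> ^ k"
    and t_nonneg: "t \<ge> 0"
    and n_pos: "n \<ge> 1"
  shows "let cp = norm (id_blinfun - P);
             eb = (SUP s\<in>{0..t}. norm (bl_exp (s *\<^sub>R (P o\<^sub>L L o\<^sub>L P))));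
             l = norm L
         in norm (bl_pow (M o\<^sub>L bl_exp ((t / real n) *\<^sub>R L)) n
                  - (bl_exp (t *\<^sub>R (P o\<^sub>L L o\<^sub>L P)) o\<^sub>L P))
            \<le> cp * t * l / real n
              + (cp + (1 + eb) * (1 + cp ^ 2)) / 2 * (t ^ 2 * l ^ 2 / real n)
              + \<delta> ^ n
              + 2 * \<delta> / (1 - \<delta>) * (exp (3 * t * l * cp) / real n)"
proof -
  have bl_exp_e: "bl_exp (s *\<^sub>R T) = opr (exp (s *\<^sub>R emb T))" for s and T :: "'a \<Rightarrow>\<^sub>L 'a"
    by (simp add: bl_exp_opr emb_scaleR)
  have contrN: "N (exp (s *\<^sub>R emb L)) \<le> 1" if "s \<ge> 0" for s
    using contractive_semigroup[OF that] by (simp add: N_def bl_exp_e)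
  have convN: "N (emb M ^ k - emb P) \<le> \<delta> ^ k" if "k \<ge> 1" for k
    using M_conv[OF that] by (simp add: N_def opr_diff bl_pow_opr opr_emb)
  have cpN: "norm (id_blinfun - P) = N (1 - emb P)" by (simp add: N_def opr_diff opr_one opr_emb)
  have lN: "norm L = N (emb L)" by (simp add: N_emb)
  have ebN: "(SUP s\<in>{0..t}. norm (bl_exp (s *\<^sub>R (P o\<^sub>L L o\<^sub>L P))))
      = (SUP s\<in>{0..t}. N (exp (s *\<^sub>R (emb P * emb L * emb P))))"
    by (simp add: N_def bl_exp_e emb_comp)
  have lhs1: "bl_pow (M o\<^sub>L bl_exp ((t / real n) *\<^sub>R L)) n = opr ((emb M * exp ((t / real n) *\<^sub>R emb L)) ^ n)"
  proof -
    have "M o\<^sub>L bl_exp ((t / real n) *\<^sub>R L) = opr (emb M * exp ((t / real n) *\<^sub>R emb L))"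
      by (simp add: bl_exp_e opr_mult opr_emb)
    then show ?thesis by (simp add: bl_pow_opr opr_emb_opr_pow)
  qed
  have lhs2: "bl_exp (t *\<^sub>R (P o\<^sub>L L o\<^sub>L P)) o\<^sub>L P = opr (exp (t *\<^sub>R (emb P * emb L * emb P)) * emb P)"
    by (simp add: bl_exp_e opr_mult opr_emb emb_comp)
  have C: "N ((emb M * exp ((t / real n) *\<^sub>R emb L)) ^ n - exp (t *\<^sub>R (emb P * emb L * emb P)) * emb P)
     \<le> N (1 - emb P) * t * N (emb L) / real n
       + (N (1 - emb P) + (1 + (SUP s\<in>{0..t}. N (exp (s *\<^sub>R (emb P * emb L * emb P))))) * (1 + N (1 - emb P) ^ 2)) / 2 * (t ^ 2 * N (emb L) ^ 2 / real n)
       + \<delta> ^ n + 2 * \<delta> / (1 - \<delta>) * (exp (3 * t * N (emb L) * N (1 - emb P)) / real n)"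
    by (rule core[OF contrN M_contraction P_projection \<delta>_range convN t_nonneg n_pos refl refl refl])
  show ?thesis
    unfolding Let_def lhs1 lhs2 cpN lN ebN
    using C by (simp add: N_def opr_diff)
qed

end
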